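(* Let $\lambda>0$ be fixed, and assume there are constants $C_d>C_u>0$ and events $\mathcal{B}_N$ on the predictor sample, with $\mathbb{P}(\mathcal{B}_N)\to1$, such that on $\mathcal{B}_N$, with $K_0=\lfloor\ln(N)/(2C_d+1)\rfloor$, the eigenvalues $\widehat\mu_1\ge\dots\ge\widehat\mu_N$ of the Gram matrix satisfy $$\sum_{k=K_0}^N\widehat\mu_k\le\sum_{k=K_0}^Ne^{-C_uk}\quad\text{and}\quad\widehat\mu_{K_0}\ge e^{-C_dK_0}.$$ Then for $m=m(N)=N^{\frac14\frac{C_u+C_d+1/2}{C_d+1}}$, on $\mathcal{B}_N$, $$\frac1{\sqrt N}\sum_{\ell=1}^N\Big(1-\Big(1-\frac{\widehat\mu_\ell}{\widehat\mu_\ell+\lambda}\Big)^m\Big)^2\to0\qquad(N\to\infty).$$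
   Context: Gram matrix: $G_{ij}=K(\widetilde{\mathbf{x}}_i,\widetilde{\mathbf{x}}_j)/N$ for the additive kernel $K(\mathbf{x},\mathbf{x}')=\sum_{j=1}^d\exp(-|x_j-x_j'|^2/(2\varsigma_j))$ evaluated at the sample $\widetilde{\mathbf{x}}_1,\dots,\widetilde{\mathbf{x}}_N\in\mathbb{R}^d$. *)

theory Defs
  imports Complex_Main "Jordan_Normal_Form.Char_Poly"
begin

definition add_kernel :: "nat \<Rightarrow> (nat \<Rightarrow> real) \<Rightarrow> (nat \<Rightarrow> real) \<Rightarrow> (nat \<Rightarrow> real) \<Rightarrow> real" where
  "add_kernel d vs x x' = (\<Sum>j=1..d. exp (- ((\<bar>x j - x' j\<bar>) ^ 2) / (2 * vs j)))"

text \<open>Gram matrix G_ij = K(x_i, x_j)/N of the sample x_1..x_N (stored 0-based: x 0 .. x (N-1)).\<close>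
definition gram :: "nat \<Rightarrow> (nat \<Rightarrow> real) \<Rightarrow> nat \<Rightarrow> (nat \<Rightarrow> nat \<Rightarrow> real) \<Rightarrow> real mat" where
  "gram d vs N x = mat N N (\<lambda>(i,j). add_kernel d vs (x i) (x j) / real N)"

end

theory Submission
  imports Defs
begin


lemma gauss_factor:
  fixes a b s :: real assumes "s > 0"
  shows "exp (- ((\<bar>a - b\<bar>) ^ 2) / (2 * s)) = exp (- (a^2)/(2*s)) * exp (- (b^2)/(2*s)) * exp (a*b/s)"
proof -
  have "- ((\<bar>a - b\<bar>) ^ 2) / (2 * s) = - (a^2)/(2*s) + - (b^2)/(2*s) + a*b/s"
    using assms by (simp add: field_simps power2_eq_square)
  hence "exp (- ((\<bar>a - b\<bar>) ^ 2) / (2 * s)) = exp (- (a^2)/(2*s) + - (b^2)/(2*s) + a*b/s)"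
    by (rule arg_cong)
  thus ?thesis by (simp only: exp_add)
qed

lemma gauss_psd:
  fixes a v :: "nat \<Rightarrow> real" and s :: real and I :: "nat set"
  assumes "s > 0" "finite I"
  shows "(\<Sum>i\<in>I. \<Sum>j\<in>I. v i * v j * exp (- ((\<bar>a i - a j\<bar>) ^ 2) / (2 * s))) \<ge> 0"
proof -
  define w where "w i = v i * exp (- ((a i)^2)/(2*s))" for i
  have eq: "(\<Sum>i\<in>I. \<Sum>j\<in>I. v i * v j * exp (- ((\<bar>a i - a j\<bar>) ^ 2) / (2 * s)))
     = (\<Sum>i\<in>I. \<Sum>j\<in>I. w i * w j * exp (a i * a j / s))"
    unfolding w_def using gauss_factor[OF assms(1)] by (simp add: algebra_simps)
  have S: "(\<lambda>n. \<Sum>i\<in>I. \<Sum>j\<in>I. w i * w j * ((a i * a j / s)^n / fact n)) sums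
      (\<Sum>i\<in>I. \<Sum>j\<in>I. w i * w j * exp (a i * a j / s))"
  proof (intro sums_sum sums_mult)
    fix i j
    show "(\<lambda>n. (a i * a j / s)^n / fact n) sums exp (a i * a j / s)"
      using exp_converges[of "a i * a j / s"] by (simp add: divide_inverse mult.commute)
  qed
  have T: "(\<Sum>i\<in>I. \<Sum>j\<in>I. w i * w j * ((a i * a j / s)^n / fact n))
      = (\<Sum>i\<in>I. w i * a i ^ n)^2 / (s^n * fact n)" for n
  proof -
    have "w i * w j * ((a i * a j / s)^n / fact n) = (w i * a i ^ n) * (w j * a j ^ n) / (s^n * fact n)" for i j
      by (simp add: power_mult_distrib power_divide)
    hence "(\<Sum>i\<in>I. \<Sum>j\<in>I. w i * w j * ((a i * a j / s)^n / fact n))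
       = (\<Sum>i\<in>I. \<Sum>j\<in>I. (w i * a i ^ n) * (w j * a j ^ n) / (s^n * fact n))" by simp
    also have "\<dots> = (\<Sum>i\<in>I. w i * a i ^ n)^2 / (s^n * fact n)"
      by (simp only: power2_eq_square sum_product sum_divide_distrib)
    finally show ?thesis .
  qed
  have N0: "0 \<le> suminf (\<lambda>n. \<Sum>i\<in>I. \<Sum>j\<in>I. w i * w j * ((a i * a j / s)^n / fact n))"
    apply (rule suminf_nonneg)
    using S sums_summable apply blast
    unfolding T using assms(1) by simp
  have U: "(\<Sum>i\<in>I. \<Sum>j\<in>I. w i * w j * exp (a i * a j / s))
     = suminf (\<lambda>n. \<Sum>i\<in>I. \<Sum>j\<in>I. w i * w j * ((a i * a j / s)^n / fact n))"
    by (rule sums_unique[OF S])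
  show ?thesis unfolding eq U by (rule N0)
qed

lemma kernel_psd:
  fixes x :: "nat \<Rightarrow> nat \<Rightarrow> real" and v :: "nat \<Rightarrow> real"
  assumes "\<And>j. j \<in> {1..d} \<Longrightarrow> vs j > 0" "finite I"
  shows "(\<Sum>i\<in>I. \<Sum>j\<in>I. v i * v j * add_kernel d vs (x i) (x j)) \<ge> 0"
proof -
  have "(\<Sum>i\<in>I. \<Sum>j\<in>I. v i * v j * add_kernel d vs (x i) (x j))
     = (\<Sum>c=1..d. \<Sum>i\<in>I. \<Sum>j\<in>I. v i * v j * exp (- ((\<bar>x i c - x j c\<bar>) ^ 2) / (2 * vs c)))"
  proof -
    have "(\<Sum>i\<in>I. \<Sum>j\<in>I. v i * v j * add_kernel d vs (x i) (x j))
      = (\<Sum>i\<in>I. \<Sum>c=1..d. \<Sum>j\<in>I. v i * v j * exp (- ((\<bar>x i c - x j c\<bar>) ^ 2) / (2 * vs c)))"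
      unfolding add_kernel_def sum_distrib_left by (intro sum.cong refl sum.swap)
    also have "\<dots> = (\<Sum>c=1..d. \<Sum>i\<in>I. \<Sum>j\<in>I. v i * v j * exp (- ((\<bar>x i c - x j c\<bar>) ^ 2) / (2 * vs c)))"
      by (rule sum.swap)
    finally show ?thesis .
  qed
  also have "\<dots> \<ge> 0"
    apply (rule sum_nonneg)
    subgoal for c using gauss_psd[of "vs c" I v "\<lambda>i. x i c"] assms by auto
    done
  finally show ?thesis .
qed


lemma gram_eig_nonneg:
  fixes x :: "nat \<Rightarrow> nat \<Rightarrow> real"
  assumes vs: "\<And>j. j \<in> {1..d} \<Longrightarrow> vs j > 0"
    and root: "poly (char_poly (gram d vs N x)) c = 0"
  shows "c \<ge> 0"
proof -
  let ?G = "gram d vs N x"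
  have G: "?G \<in> carrier_mat N N" unfolding gram_def by simp
  have "eigenvalue ?G c" using eigenvalue_root_char_poly[OF G] root by simp
  then obtain v where v: "v \<in> carrier_vec N" "v \<noteq> 0\<^sub>v N" "?G *\<^sub>v v = c \<cdot>\<^sub>v v"
    unfolding eigenvalue_def eigenvector_def using G by auto
  have dv: "dim_vec v = N" using v(1) by simp
  have "v \<bullet> (?G *\<^sub>v v) = (\<Sum>i<N. \<Sum>j<N. v$i * v$j * (add_kernel d vs (x i) (x j) / real N))"
    unfolding scalar_prod_def using G dv
    by (simp add: gram_def lessThan_atLeast0 sum_distrib_left mult_ac index_row scalar_prod_def)
  also have "\<dots> = (\<Sum>i<N. \<Sum>j<N. v$i * v$j * add_kernel d vs (x i) (x j)) / real N"
    by (simp add: sum_divide_distrib)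
  also have "\<dots> \<ge> 0" using kernel_psd[OF vs, where I="{..<N}" and v="\<lambda>i. v$i" and x=x] by simp
  finally have A: "v \<bullet> (?G *\<^sub>v v) \<ge> 0" .
  have B: "v \<bullet> (?G *\<^sub>v v) = c * (\<Sum>i<N. (v$i)^2)"
    unfolding v(3) scalar_prod_def using dv
    by (simp add: lessThan_atLeast0 sum_distrib_left power2_eq_square mult_ac)
  obtain i where i: "i < N" "v$i \<noteq> 0" using v(1,2) by (auto simp: vec_eq_iff)
  have "(\<Sum>i<N. (v$i)^2) > 0"
    by (rule sum_pos2[of _ i]) (use i in auto)
  thus ?thesis using A B by (simp add: zero_le_mult_iff)
qed



lemma term_bounds:
  fixes mu lam m :: real
  assumes "mu \<ge> 0" "lam > 0" "m \<ge> 0"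
  shows "(1 - (1 - mu/(mu+lam)) powr m)^2 \<le> 1"
    and "(1 - (1 - mu/(mu+lam)) powr m)^2 \<le> (m*mu/lam)^2"
proof -
  define y where "y = lam/(mu+lam)"
  have yeq: "1 - mu/(mu+lam) = y" unfolding y_def using assms by (simp add: field_simps)
  have y0: "y > 0" "y \<le> 1" unfolding y_def using assms by auto
  have p1: "y powr m \<le> 1" using y0 assms by (simp add: powr_le1)
  have p0: "y powr m > 0" using y0 by simp
  show "(1 - (1 - mu/(mu+lam)) powr m)^2 \<le> 1" unfolding yeq
    using p0 p1 by (intro power_le_one) auto
  have "ln y = - ln (1 + mu/lam)"
    unfolding y_def using assms by (simp add: ln_div field_simps)
  moreover have "ln (1 + mu/lam) \<le> mu/lam" using assms by (intro ln_add_one_self_le_self) auto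
  ultimately have "- (mu/lam) \<le> ln y" by linarith
  hence "m * (- (mu/lam)) \<le> m * ln y" using assms(3) by (rule mult_left_mono)
  hence lny: "m * ln y \<ge> - (m * mu/lam)" by simp
  have "y powr m = exp (m * ln y)" using y0 by (simp add: powr_def mult.commute)
  also have "\<dots> \<ge> 1 + m * ln y" by (rule exp_ge_add_one_self)
  finally have "1 - y powr m \<le> m*mu/lam" using lny by linarith
  thus "(1 - (1 - mu/(mu+lam)) powr m)^2 \<le> (m*mu/lam)^2" unfolding yeq
    using p1 by (intro power_mono) auto
qed

lemma lim1: "(\<lambda>N::nat. ln (real N) / sqrt (real N)) \<longlonglongrightarrow> 0"
proof -
  have "(\<lambda>N::nat. ln (sqrt (real N)) / sqrt (real N)) \<longlonglongrightarrow> 0"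
    by (rule filterlim_compose[OF ln_x_over_x_tendsto_0 filterlim_compose[OF sqrt_at_top filterlim_real_sequentially]])
  hence "(\<lambda>N::nat. 2 * (ln (sqrt (real N)) / sqrt (real N))) \<longlonglongrightarrow> 0"
    by (intro tendsto_mult_right_zero)
  moreover have eqf: "(\<lambda>N::nat. 2 * (ln (sqrt (real N)) / sqrt (real N))) = (\<lambda>N. ln (real N) / sqrt (real N))"
  proof (rule ext)
    fix N :: nat
    show "2 * (ln (sqrt (real N)) / sqrt (real N)) = ln (real N) / sqrt (real N)"
      by (cases "N = 0") (simp_all add: ln_sqrt)
  qed
  ultimately show ?thesis by (simp only:)
qed

lemma sq_sum_le:
  fixes f :: "nat \<Rightarrow> real"
  assumes "finite A" "\<And>x. x \<in> A \<Longrightarrow> f x \<ge> 0"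
  shows "(\<Sum>x\<in>A. (f x)^2) \<le> (\<Sum>x\<in>A. f x)^2"
proof -
  have "(\<Sum>x\<in>A. (f x)^2) \<le> (\<Sum>x\<in>A. f x * (\<Sum>y\<in>A. f y))"
    unfolding power2_eq_square
    by (intro sum_mono mult_left_mono member_le_sum) (use assms in auto)
  also have "\<dots> = (\<Sum>x\<in>A. f x)^2" by (simp add: power2_eq_square sum_distrib_right)
  finally show ?thesis .
qed

lemma geom_bound:
  fixes Cu :: real assumes "Cu > 0"
  shows "(\<Sum>k=K..N. exp (- Cu * real k)) \<le> exp (- Cu * real K) / (1 - exp (- Cu))"
proof -
  let ?q = "exp (- Cu)"
  have q: "?q < 1" "?q > 0" using assms by auto
  have e: "exp (- Cu * real k) = ?q ^ k" for k
    by (metis exp_of_nat_mult mult.commute)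
  have "(\<Sum>k=K..N. exp (- Cu * real k)) = (\<Sum>k=K..N. ?q ^ k)" by (intro sum.cong refl) (rule e)
  also have "\<dots> \<le> ?q ^ K / (1 - ?q)"
    using q by (auto simp: sum_gp divide_right_mono)
  finally show ?thesis by (simp only: e)
qed



lemma aux_half: "(c::real) > 0 \<Longrightarrow> (1/4) * x / c + (1/4) * x / c - 1/2 = (x - c) / (2*c)"
  by (simp add: field_simps)

lemma ident_aux:
  fixes s lam q P R E :: real
  assumes "s \<noteq> 0" "lam \<noteq> 0" "1 - q \<noteq> 0"
  shows "(1/s) * ((P/lam)^2 * (E*R/(1-q))^2) = (E/(1-q))^2/lam^2 * (P*P*R*R/s)"
  using assms by (simp add: power2_eq_square field_simps)

theorem lemma7:
  fixes d :: nat and vs :: "nat \<Rightarrow> real" and lam Cu Cd :: real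
    and X :: "nat \<Rightarrow> nat \<Rightarrow> (nat \<Rightarrow> real)"
    and mu :: "nat \<Rightarrow> nat \<Rightarrow> real"
  assumes vs_pos: "\<And>j. j \<in> {1..d} \<Longrightarrow> vs j > 0"
    and lam_pos: "lam > 0"
    and C_pos: "Cu > 0" "Cd > Cu"
    and on_B: "eventually (\<lambda>N.
        (\<forall>k\<in>{1..<N}. mu N k \<ge> mu N (Suc k)) \<and>
        char_poly (gram d vs N (X N)) = (\<Prod>k=1..N. [:- mu N k, 1:]) \<and>
        (let K0 = nat \<lfloor>ln (real N) / (2 * Cd + 1)\<rfloor> in
           (\<Sum>k=K0..N. mu N k) \<le> (\<Sum>k=K0..N. exp (- Cu * real k)) \<and>
           mu N K0 \<ge> exp (- Cd * real K0))) sequentially"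
  shows "(\<lambda>N. let m = real N powr ((1/4) * (Cu + Cd + 1/2) / (Cd + 1)) in
            (1 / sqrt (real N)) *
            (\<Sum>l=1..N. (1 - (1 - mu N l / (mu N l + lam)) powr m)^2))
         \<longlonglongrightarrow> 0"
proof -
  define a where "a = (1/4) * (Cu + Cd + 1/2) / (Cd + 1)"
  define b where "b = Cu / (2*Cd+1)"
  define e where "e = a + a - b - b - 1/2"
  define q where "q = exp (- Cu)"
  define Cst where "Cst = (exp Cu / (1-q))^2 / lam^2"
  define g where "g N = ln (real N) / sqrt (real N) + Cst * real N powr e" for N :: nat
  define F where "F N = (1 / sqrt (real N)) *
            (\<Sum>l=1..N. (1 - (1 - mu N l / (mu N l + lam)) powr (real N powr a))^2)" for N :: nat
  have q: "q < 1" "q > 0" unfolding q_def using C_pos by auto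
  have e_neg: "e < 0"
  proof -
    have h1: "a + a - 1/2 = (Cu - 1/2) / (2*Cd+2)" unfolding a_def using C_pos
      by (subst aux_half) (simp_all add: algebra_simps)
    have h2: "(Cu - 1/2) / (2*Cd+2) < Cu / (2*Cd+2)" using C_pos by (intro divide_strict_right_mono) auto
    have h3: "Cu / (2*Cd+2) \<le> Cu / (2*Cd+1)" using C_pos by (intro divide_left_mono) auto
    show ?thesis unfolding e_def using h1 h2 h3 C_pos unfolding b_def
      by (smt (verit) divide_pos_pos)
  qed
  have glim: "g \<longlonglongrightarrow> 0" unfolding g_def
    by (intro tendsto_add_zero lim1 tendsto_mult_right_zero tendsto_neg_powr[OF e_neg filterlim_real_sequentially])
  have ev_ln: "eventually (\<lambda>N. ln (real N) \<ge> 2*Cd+1) sequentially"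
    using filterlim_compose[OF ln_at_top filterlim_real_sequentially] unfolding filterlim_at_top by blast
  have main: "0 \<le> F N \<and> F N \<le> g N"
    if hB: "char_poly (gram d vs N (X N)) = (\<Prod>k=1..N. [:- mu N k, 1:])"
      and hS: "(\<Sum>k=nat \<lfloor>ln (real N) / (2 * Cd + 1)\<rfloor>..N. mu N k)
               \<le> (\<Sum>k=nat \<lfloor>ln (real N) / (2 * Cd + 1)\<rfloor>..N. exp (- Cu * real k))"
      and hl: "ln (real N) \<ge> 2*Cd+1" for N
  proof -
    define Lr where "Lr = ln (real N) / (2 * Cd + 1)"
    define K where "K = nat \<lfloor>Lr\<rfloor>"
    define mN where "mN = real N powr a"
    have mN0: "mN \<ge> 0" unfolding mN_def by simp
    have cd: "2*Cd+1 \<ge> 1" using C_pos by simp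
    have N1: "N \<ge> 1" using hl C_pos by (cases N) auto
    have lnN: "ln (real N) \<ge> 0" using hl C_pos by simp
    have Lr1: "Lr \<ge> 1" unfolding Lr_def using hl cd by simp
    have LrlnN: "Lr \<le> ln (real N)" unfolding Lr_def using lnN cd
      by (simp add: divide_le_eq) (smt (verit) mult_le_cancel_left1)
    have K1: "K \<ge> 1" unfolding K_def using Lr1 by linarith
    have KLr: "real K \<le> Lr" "real K > Lr - 1" unfolding K_def using Lr1 by linarith+
    have lnle: "ln (real N) \<le> real N - 1" using N1 by (intro ln_le_minus_one) auto
    have KN: "K \<le> N" using KLr LrlnN lnle by linarith
    have mu0: "mu N l \<ge> 0" if "l \<in> {1..N}" for l
    proof (rule gram_eig_nonneg[OF vs_pos])
      show "poly (char_poly (gram d vs N (X N))) (mu N l) = 0"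
        unfolding hB poly_prod using that by (intro prod_zero bexI[of _ l]) auto
    qed
    define t where "t l = (1 - (1 - mu N l / (mu N l + lam)) powr mN)^2" for l
    have split: "{1..N} = {1..<K} \<union> {K..N}" using K1 KN by auto
    have Ssplit: "(\<Sum>l=1..N. t l) = (\<Sum>l\<in>{1..<K}. t l) + (\<Sum>l=K..N. t l)"
      unfolding split by (rule sum.union_disjoint) auto
    have S1: "(\<Sum>l\<in>{1..<K}. t l) \<le> ln (real N)"
    proof -
      have "(\<Sum>l\<in>{1..<K}. t l) \<le> of_nat (card {1..<K}) * 1"
        apply (rule sum_bounded_above)
        unfolding t_def using term_bounds(1)[OF _ lam_pos mN0] mu0 KN by auto
      also have "\<dots> \<le> real K" by simp
      finally show ?thesis using KLr LrlnN by linarith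
    qed
    have sumK: "(\<Sum>l=K..N. mu N l) \<le> exp (- Cu * real K) / (1 - q)"
      using hS geom_bound[OF C_pos(1), of K N] unfolding K_def Lr_def q_def by linarith
    have sumK0: "(\<Sum>l=K..N. mu N l) \<ge> 0" using mu0 K1 by (intro sum_nonneg) auto
    have expK: "exp (- Cu * real K) \<le> exp Cu * real N powr (- b)"
    proof -
      have "exp (- Cu * real K) \<le> exp (- Cu * (Lr - 1))" using KLr C_pos by simp
      also have "\<dots> = exp Cu * exp (- Cu * Lr)" by (simp add: exp_add[symmetric] algebra_simps)
      also have "exp (- Cu * Lr) = real N powr (- b)"
        unfolding powr_def Lr_def b_def using N1 by simp
      finally show ?thesis by simp
    qed
    have S2: "(\<Sum>l=K..N. t l) \<le> (mN/lam)^2 * (exp Cu * real N powr (- b) / (1-q))^2"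
    proof -
      have "(\<Sum>l=K..N. t l) \<le> (\<Sum>l=K..N. (mN * mu N l / lam)^2)"
        unfolding t_def using term_bounds(2)[OF _ lam_pos mN0] mu0 K1 by (intro sum_mono) auto
      also have "\<dots> = (mN/lam)^2 * (\<Sum>l=K..N. (mu N l)^2)"
        by (simp add: sum_distrib_left power_mult_distrib power_divide)
      also have "\<dots> \<le> (mN/lam)^2 * (\<Sum>l=K..N. mu N l)^2"
        using mu0 K1 by (intro mult_left_mono sq_sum_le) auto
      also have "\<dots> \<le> (mN/lam)^2 * (exp Cu * real N powr (- b) / (1-q))^2"
      proof -
        have "exp (- Cu * real K) / (1 - q) \<le> exp Cu * real N powr (- b) / (1-q)"
          using expK q by (intro divide_right_mono) auto
        hence "(\<Sum>l=K..N. mu N l) \<le> exp Cu * real N powr (- b) / (1-q)" using sumK by linarith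
        thus ?thesis using sumK0 by (intro mult_left_mono power_mono) auto
      qed
      finally show ?thesis .
    qed
    have ident: "(1 / sqrt (real N)) * ((mN/lam)^2 * (exp Cu * real N powr (- b) / (1-q))^2)
        = Cst * real N powr e"
    proof -
      have e2: "e = a + a + (-b) + (-b) - 1/2" unfolding e_def by simp
      have "real N powr e = real N powr a * real N powr a * real N powr (-b) * real N powr (-b) / real N powr (1/2)"
        unfolding e2 by (simp only: powr_diff powr_add)
      also have "real N powr (1/2) = sqrt (real N)" by (simp add: powr_half_sqrt)
      finally have pe: "real N powr e = real N powr a * real N powr a * real N powr (-b) * real N powr (-b) / sqrt (real N)" .
      have s0: "sqrt (real N) \<noteq> 0" using N1 by simp
      show ?thesis unfolding Cst_def mN_def pe
        by (rule ident_aux[OF s0]) (use lam_pos q in auto)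
    qed
    have Fe: "F N = (1 / sqrt (real N)) * (\<Sum>l=1..N. t l)" unfolding F_def t_def mN_def by simp
    have t0: "(\<Sum>l=1..N. t l) \<ge> 0" unfolding t_def by (intro sum_nonneg) auto
    have "F N \<le> (1 / sqrt (real N)) * (ln (real N) + (mN/lam)^2 * (exp Cu * real N powr (- b) / (1-q))^2)"
      unfolding Fe Ssplit using S1 S2 by (intro mult_left_mono) auto
    also have "\<dots> = g N" unfolding g_def using ident by (simp add: distrib_left)
    finally show ?thesis using Fe t0 by simp
  qed
  have ev: "eventually (\<lambda>N. 0 \<le> F N \<and> F N \<le> g N) sequentially"
    using eventually_conj[OF on_B ev_ln] by eventually_elim (use main in \<open>auto simp: Let_def\<close>)
  have "F \<longlonglongrightarrow> 0"
    by (rule tendsto_sandwich[OF _ _ tendsto_const glim]) (use ev in \<open>auto elim: eventually_mono\<close>)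
  thus ?thesis unfolding F_def a_def Let_def .
qed

end
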